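(* Let $G=(V,E)$ be an undirected graph with $|V|=p$ and $\sigma$ an ordering of $V$. If the ordered graph $G_\sigma$ satisfies Property-A and Property-B, then $G$ is a Generalized Bartlett graph and $\sigma$ is a Generalized Bartlett ordering for $G$.
   Context: Ordered graph: $G_\sigma$ has vertices $\{1,\dots,p\}$ and edges $E_\sigma=\{(i,j):(\sigma^{-1}(i),\sigma^{-1}(j))\in E\}$. For $\Omega\in\mathbb{P}_{G_\sigma}$ (symmetric positive definite, $\Omega_{ij}=0$ for $i\ne j$, $(i,j)\notin E_\sigma$) write $\Omega=LDL^T$ (modified Cholesky: $L$ unit lower triangular, $D=\mathrm{diag}(D_1,\dots,D_p)$, $D_i>0$), and set $\widetilde D_1=D_1$, $\widetilde D_k=D_k/D_{k-1}$ ($k\ge2$). The entries $L_I=\{L_{ij}:i>j,(i,j)\in E_\sigma\}$ are independent parameters. For $i>j$ with $(i,j)\notin E_\sigma$, $\Omega_{ij}=0$ gives $L_{ij}=-\sum_{k=1}^{j-1}L_{ik}L_{jk}\prod_{l=k+1}^{j}\widetilde D_l^{-1}$; substituting recursively, each such $L_{ij}$ is a polynomial (its expansion, with like terms collected) in the entries of $L_I$ and $\widetilde D_1^{-1},\dots,\widetilde D_p^{-1}$, each term of the form $\pm\prod_{(r,s)}L_{rs}^{c_{rs}}\prod_k\widetilde D_k^{d_k}$ with $c_{rs}\ge0$, $d_k\le0$ integers. $G_\sigma$ has Property-A if for every $i>j$ with $(i,j)\notin E_\sigma$ every exponent $c_{rs}$ in the expansion of $L_{ij}$ lies in $\{0,1\}$;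 it has Property-B if every exponent $d_k$ in the expansion of every such $L_{ij}$ lies in $\{0,-1\}$. Triangulation: $E^\sigma_0=E$, and for $i=1,\dots,p-2$, $E^\sigma_i=E^\sigma_{i-1}\cup\{\{u,v\}:u\ne v,\sigma(u)>i,\sigma(v)>i,\{u,\sigma^{-1}(i)\},\{v,\sigma^{-1}(i)\}\in E^\sigma_{i-1}\}$; $D^\sigma(E)=E^\sigma_{p-2}$. $\sigma$ is a Generalized Bartlett ordering of $G$ if there are no $u,v,w$ with $\{u,v\},\{v,w\},\{u,w\}\notin E$ but all in $D^\sigma(E)$; $G$ is Generalized Bartlett if such an ordering exists. *)

theory Defs
  imports Main "HOL-Library.Poly_Mapping"
begin

definition is_graph :: "'a set \<Rightarrow> 'a set set \<Rightarrow> bool" where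
  "is_graph V E \<longleftrightarrow> finite V \<and> (\<forall>e\<in>E. \<exists>u v. e = {u, v} \<and> u \<noteq> v \<and> u \<in> V \<and> v \<in> V)"

definition is_ordering :: "'a set \<Rightarrow> ('a \<Rightarrow> nat) \<Rightarrow> bool" where
  "is_ordering V \<sigma> \<longleftrightarrow> bij_betw \<sigma> V {1..card V}"

definition ordered_edges :: "'a set \<Rightarrow> 'a set set \<Rightarrow> ('a \<Rightarrow> nat) \<Rightarrow> (nat \<times> nat) set" where
  "ordered_edges V E \<sigma> =
     {(i, j). i \<in> {1..card V} \<and> j \<in> {1..card V} \<and> {inv_into V \<sigma> i, inv_into V \<sigma> j} \<in> E}"

(* Formal variables: LV r s stands for L_rs, DV k stands for tilde D_k^{-1} *)
datatype lvar = LV nat nat | DV nat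

type_synonym lpoly = "(lvar \<Rightarrow>\<^sub>0 nat) \<Rightarrow>\<^sub>0 int"

definition pvar :: "lvar \<Rightarrow> lpoly" where
  "pvar x = Poly_Mapping.single (Poly_Mapping.single x 1) 1"

function Lsym :: "(nat \<times> nat) set \<Rightarrow> nat \<Rightarrow> nat \<Rightarrow> lpoly" where
  "Lsym Es i j =
     (if (i, j) \<in> Es then pvar (LV i j)
      else - (\<Sum>k\<in>{1..<j}. Lsym Es i k * Lsym Es j k * (\<Prod>l\<in>{k+1..j}. pvar (DV l))))"
  by pat_completeness auto
termination by (relation "measure (\<lambda>(Es, i, j). j)") auto

definition property_A :: "nat \<Rightarrow> (nat \<times> nat) set \<Rightarrow> bool" where
  "property_A p Es \<longleftrightarrow>
     (\<forall>i j. 1 \<le> j \<and> j < i \<and> i \<le> p \<and> (i, j) \<notin> Es \<longrightarrow>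
        (\<forall>m \<in> Poly_Mapping.keys (Lsym Es i j). \<forall>r s. Poly_Mapping.lookup m (LV r s) \<le> 1))"

(* Property-B: every exponent d_k of tilde D_k lies in {0,-1}, i.e. the exponent
   of the variable tilde D_k^{-1} lies in {0,1} *)
definition property_B :: "nat \<Rightarrow> (nat \<times> nat) set \<Rightarrow> bool" where
  "property_B p Es \<longleftrightarrow>
     (\<forall>i j. 1 \<le> j \<and> j < i \<and> i \<le> p \<and> (i, j) \<notin> Es \<longrightarrow>
        (\<forall>m \<in> Poly_Mapping.keys (Lsym Es i j). \<forall>k. Poly_Mapping.lookup m (DV k) \<le> 1))"

fun tri :: "'a set \<Rightarrow> 'a set set \<Rightarrow> ('a \<Rightarrow> nat) \<Rightarrow> nat \<Rightarrow> 'a set set" where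
  "tri V E \<sigma> 0 = E"
| "tri V E \<sigma> (Suc i) = tri V E \<sigma> i \<union>
     {{u, v} | u v. u \<noteq> v \<and> u \<in> V \<and> v \<in> V \<and> \<sigma> u > Suc i \<and> \<sigma> v > Suc i \<and>
        {u, inv_into V \<sigma> (Suc i)} \<in> tri V E \<sigma> i \<and> {v, inv_into V \<sigma> (Suc i)} \<in> tri V E \<sigma> i}"

definition triangulation :: "'a set \<Rightarrow> 'a set set \<Rightarrow> ('a \<Rightarrow> nat) \<Rightarrow> 'a set set" where
  "triangulation V E \<sigma> = tri V E \<sigma> (card V - 2)"

definition GB_ordering :: "'a set \<Rightarrow> 'a set set \<Rightarrow> ('a \<Rightarrow> nat) \<Rightarrow> bool" where
  "GB_ordering V E \<sigma> \<longleftrightarrow> is_ordering V \<sigma> \<and>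
     \<not> (\<exists>u v w. {u, v} \<notin> E \<and> {v, w} \<notin> E \<and> {u, w} \<notin> E \<and>
        {u, v} \<in> triangulation V E \<sigma> \<and> {v, w} \<in> triangulation V E \<sigma> \<and>
        {u, w} \<in> triangulation V E \<sigma>)"

definition GB_graph :: "'a set \<Rightarrow> 'a set set \<Rightarrow> bool" where
  "GB_graph V E \<longleftrightarrow> (\<exists>\<sigma>. GB_ordering V E \<sigma>)"

end

theory Submission
  imports Defs
begin


fun isLV :: "lvar \<Rightarrow> bool" where
  "isLV (LV _ _) = True" | "isLV (DV _) = False"

definition Ldeg :: "(lvar \<Rightarrow>\<^sub>0 nat) \<Rightarrow> nat" where
  "Ldeg m = (\<Sum>x\<in>Poly_Mapping.keys m. if isLV x then Poly_Mapping.lookup m x else 0)"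

lemma Ldeg_superset:
  assumes "finite S" "Poly_Mapping.keys m \<subseteq> S"
  shows "Ldeg m = (\<Sum>x\<in>S. if isLV x then Poly_Mapping.lookup m x else 0)"
  unfolding Ldeg_def
  by (rule sum.mono_neutral_left) (use assms in \<open>auto simp: in_keys_iff\<close>)

lemma Ldeg_add: "Ldeg (a + b) = Ldeg a + Ldeg b"
proof -
  let ?S = "Poly_Mapping.keys a \<union> Poly_Mapping.keys b"
  have f: "finite ?S" by simp
  have "Ldeg (a + b) = (\<Sum>x\<in>?S. if isLV x then Poly_Mapping.lookup (a+b) x else 0)"
    by (rule Ldeg_superset[OF f]) (rule keys_add)
  also have "\<dots> = (\<Sum>x\<in>?S. (if isLV x then Poly_Mapping.lookup a x else 0) + (if isLV x then Poly_Mapping.lookup b x else 0))"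
    by (rule sum.cong) (auto simp: lookup_add)
  also have "\<dots> = Ldeg a + Ldeg b"
    by (simp add: sum.distrib Ldeg_superset[OF f])
  finally show ?thesis .
qed

definition sg :: "(lvar \<Rightarrow>\<^sub>0 nat) \<Rightarrow> int" where
  "sg m = (-1) ^ Ldeg m"

lemma sg_add: "sg (a + b) = sg a * sg b"
  by (simp add: sg_def Ldeg_add power_add)

lemma sg_nz: "sg m \<noteq> 0"
  by (simp add: sg_def)

definition sgok :: "int \<Rightarrow> lpoly \<Rightarrow> bool" where
  "sgok s P \<longleftrightarrow> (\<forall>m. 0 \<le> s * sg m * Poly_Mapping.lookup P m)"

lemma lookup_mult_sum:
  "Poly_Mapping.lookup (f * g) k =
     (\<Sum>(a,b)\<in>Poly_Mapping.keys f \<times> Poly_Mapping.keys g.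
        if k = a + b then Poly_Mapping.lookup f a * Poly_Mapping.lookup g b else 0)"
proof -
  have "Poly_Mapping.lookup (f * g) k = prod_fun (Poly_Mapping.lookup f) (Poly_Mapping.lookup g) k"
    by (simp add: lookup_mult prod_fun_def)
  also have "\<dots> = (\<Sum>(a, b). Poly_Mapping.lookup f a * Poly_Mapping.lookup g b when k = a + b)"
    by (rule prod_fun_unfold_prod) auto
  also have "\<dots> = (\<Sum>(a,b)\<in>Poly_Mapping.keys f \<times> Poly_Mapping.keys g.
        Poly_Mapping.lookup f a * Poly_Mapping.lookup g b when k = a + b)"
    by (rule Sum_any.expand_superset) (auto simp: in_keys_iff when_def split: if_splits)
  finally show ?thesis by (simp add: when_def)
qed

lemma mult_expand:
  "s * t * sg k * Poly_Mapping.lookup (P * Q) k =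
     (\<Sum>(a,b)\<in>Poly_Mapping.keys P \<times> Poly_Mapping.keys Q.
        if k = a + b then (s * sg a * Poly_Mapping.lookup P a) * (t * sg b * Poly_Mapping.lookup Q b) else 0)"
    unfolding lookup_mult_sum sum_distrib_left
    by (rule sum.cong) (auto simp: sg_add algebra_simps)

lemma sgok_mult:
  assumes "sgok s P" "sgok t Q"
  shows "sgok (s*t) (P*Q)"
  unfolding sgok_def
proof
  fix k
  have "0 \<le> s * t * sg k * Poly_Mapping.lookup (P * Q) k"
    unfolding mult_expand
    using assms unfolding sgok_def
    by (intro sum_nonneg) (auto intro: mult_nonneg_nonneg)
  then show "0 \<le> s * t * sg k * Poly_Mapping.lookup (P * Q) k" .
qed

lemma sgok_mult_keys:
  assumes "sgok s P" "sgok t Q" "s \<noteq> 0" "t \<noteq> 0"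
    and "m1 \<in> Poly_Mapping.keys P" "m2 \<in> Poly_Mapping.keys Q"
  shows "m1 + m2 \<in> Poly_Mapping.keys (P * Q)"
proof -
  let ?k = "m1 + m2"
  have "0 < s * t * sg ?k * Poly_Mapping.lookup (P * Q) ?k"
    unfolding mult_expand
  proof (rule sum_pos2)
    show "finite (Poly_Mapping.keys P \<times> Poly_Mapping.keys Q)" by simp
    show "(m1, m2) \<in> Poly_Mapping.keys P \<times> Poly_Mapping.keys Q" using assms by simp
    have "0 \<le> s * sg m1 * Poly_Mapping.lookup P m1" "0 \<le> t * sg m2 * Poly_Mapping.lookup Q m2"
      using assms unfolding sgok_def by auto
    moreover have "s * sg m1 * Poly_Mapping.lookup P m1 \<noteq> 0" "t * sg m2 * Poly_Mapping.lookup Q m2 \<noteq> 0"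
      using assms sg_nz by (auto simp: in_keys_iff)
    ultimately have p1: "0 < s * sg m1 * Poly_Mapping.lookup P m1" and p2: "0 < t * sg m2 * Poly_Mapping.lookup Q m2"
      by (metis less_le)+
    show "0 < (case (m1, m2) of (a, b) \<Rightarrow> if ?k = a + b then (s * sg a * Poly_Mapping.lookup P a) * (t * sg b * Poly_Mapping.lookup Q b) else 0)"
      using mult_pos_pos[OF p1 p2] by simp
    fix i assume "i \<in> Poly_Mapping.keys P \<times> Poly_Mapping.keys Q"
    show "0 \<le> (case i of (a, b) \<Rightarrow> if ?k = a + b then (s * sg a * Poly_Mapping.lookup P a) * (t * sg b * Poly_Mapping.lookup Q b) else 0)"
      using assms(1,2) unfolding sgok_def by (cases i) (auto intro: mult_nonneg_nonneg)
  qed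
  then show ?thesis by (auto simp: in_keys_iff)
qed

lemma sgok_sum:
  assumes "\<And>i. i \<in> A \<Longrightarrow> sgok s (P i)"
  shows "sgok s (\<Sum>i\<in>A. P i)"
  using assms unfolding sgok_def lookup_sum sum_distrib_left
  by (auto intro: sum_nonneg)

lemma sgok_sum_keys:
  assumes "\<And>i. i \<in> A \<Longrightarrow> sgok s (P i)" "finite A" "s \<noteq> 0" "i \<in> A" "m \<in> Poly_Mapping.keys (P i)"
  shows "m \<in> Poly_Mapping.keys (\<Sum>i\<in>A. P i)"
proof -
  have "0 < s * sg m * Poly_Mapping.lookup (\<Sum>i\<in>A. P i) m"
    unfolding lookup_sum sum_distrib_left
  proof (rule sum_pos2[OF assms(2) assms(4)])
    show "0 < s * sg m * Poly_Mapping.lookup (P i) m"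
      using assms sg_nz unfolding sgok_def
      by (metis in_keys_iff less_le mult_eq_0_iff)
    fix j assume "j \<in> A"
    show "0 \<le> s * sg m * Poly_Mapping.lookup (P j) m" using assms(1)[OF \<open>j \<in> A\<close>] unfolding sgok_def by auto
  qed
  then show ?thesis by (auto simp: in_keys_iff)
qed

lemma sgok_uminus: "sgok s P \<Longrightarrow> sgok (-s) (-P)"
  unfolding sgok_def by simp

lemma keys_uminus': "Poly_Mapping.keys (- (P::lpoly)) = Poly_Mapping.keys P"
  by (auto simp: in_keys_iff)

lemma pvar_keys: "Poly_Mapping.keys (pvar x) = {Poly_Mapping.single x 1}"
  by (simp add: pvar_def)

lemma sgok_pvarLV: "sgok (-1) (pvar (LV i j))"
  unfolding sgok_def pvar_def sg_def Ldeg_def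
  by (auto simp: lookup_single when_def)

definition Dmon :: "nat set \<Rightarrow> (lvar \<Rightarrow>\<^sub>0 nat)" where
  "Dmon A = (\<Sum>l\<in>A. Poly_Mapping.single (DV l) 1)"

lemma prod_D: "finite A \<Longrightarrow> (\<Prod>l\<in>A. pvar (DV l)) = Poly_Mapping.single (Dmon A) 1"
proof (induction A rule: finite_induct)
  case empty then show ?case by (simp add: Dmon_def one_poly_mapping.abs_eq single.abs_eq when_def) 
next
  case (insert x F)
  then show ?case by (simp add: Dmon_def pvar_def mult_single add.commute)
qed

lemma keys_Dmon: "Poly_Mapping.keys (Dmon A) \<subseteq> DV ` A"
  unfolding Dmon_def using keys_sum by fastforce

lemma Ldeg_Dmon: "Ldeg (Dmon A) = 0"
  unfolding Ldeg_def using keys_Dmon[of A] by (auto intro!: sum.neutral)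

lemma lookup_Dmon: "finite A \<Longrightarrow> c \<in> A \<Longrightarrow> Poly_Mapping.lookup (Dmon A) (DV c) = 1"
  unfolding Dmon_def lookup_sum
  by (simp add: lookup_single when_def)

lemma sgok_prodD: "finite A \<Longrightarrow> sgok 1 (\<Prod>l\<in>A. pvar (DV l))"
  unfolding sgok_def prod_D by (auto simp: lookup_single when_def sg_def Ldeg_Dmon)

lemma keys_prodD: "finite A \<Longrightarrow> Poly_Mapping.keys (\<Prod>l\<in>A. pvar (DV l)) = {Dmon A}"
  by (simp add: prod_D)

lemma sgok_Lsym: "sgok (-1) (Lsym Es i j)"
proof (induction Es i j rule: Lsym.induct)
  case (1 Es i j)
  show ?case
  proof (cases "(i, j) \<in> Es")
    case True then show ?thesis by (simp add: sgok_pvarLV)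
  next
    case False
    have "sgok 1 (\<Sum>k\<in>{1..<j}. Lsym Es i k * Lsym Es j k * (\<Prod>l\<in>{k+1..j}. pvar (DV l)))"
      using 1 False by (intro sgok_sum) (metis sgok_mult sgok_prodD finite_atLeastAtMost mult_minus1 mult_1_right minus_minus atLeastLessThan_iff)
    then show ?thesis using False by (simp add: sgok_uminus[where s=1, simplified])
  qed
qed



declare Lsym.simps[simp del]

lemma Lsym_nonedge: "(i, j) \<notin> Es \<Longrightarrow> Lsym Es i j =
  - (\<Sum>k\<in>{1..<j}. Lsym Es i k * Lsym Es j k * (\<Prod>l\<in>{k+1..j}. pvar (DV l)))"
  by (subst Lsym.simps) (simp only: if_False if_True simp_thms)

lemma Lsym_edge: "(i, j) \<in> Es \<Longrightarrow> Lsym Es i j = pvar (LV i j)"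
  by (subst Lsym.simps) (simp only: if_False if_True simp_thms)

lemma Lsym_nonedge_DV:
  assumes "(i, j) \<notin> Es" "m \<in> Poly_Mapping.keys (Lsym Es i j)"
  shows "1 \<le> Poly_Mapping.lookup m (DV j)"
proof -
  have "m \<in> Poly_Mapping.keys (\<Sum>k\<in>{1..<j}. Lsym Es i k * Lsym Es j k * (\<Prod>l\<in>{k+1..j}. pvar (DV l)))"
    using assms(2) unfolding Lsym_nonedge[OF assms(1)] keys_uminus' .
  then have "m \<in> (\<Union>k\<in>{1..<j}. Poly_Mapping.keys (Lsym Es i k * Lsym Es j k * (\<Prod>l\<in>{k+1..j}. pvar (DV l))))"
    by (rule subsetD[OF keys_sum])
  then obtain k where k: "k \<in> {1..<j}" and
    mk: "m \<in> Poly_Mapping.keys (Lsym Es i k * Lsym Es j k * (\<Prod>l\<in>{k+1..j}. pvar (DV l)))"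
    by (rule UN_E)
  then obtain a c where "m = a + c" "c \<in> Poly_Mapping.keys (\<Prod>l\<in>{k+1..j}. pvar (DV l))"
    using keys_mult[of "Lsym Es i k * Lsym Es j k" "\<Prod>l\<in>{k+1..j}. pvar (DV l)"] by blast
  then have "m = a + Dmon {k+1..j}" using keys_prodD[of "{k+1..j}"] by simp
  moreover have "Poly_Mapping.lookup (Dmon {k+1..j}) (DV j) = 1"
    using k by (intro lookup_Dmon) auto
  ultimately show ?thesis by (simp add: lookup_add)
qed

lemma Lsym_term_keys:
  assumes "(i, j) \<notin> Es" "k \<in> {1..<j}"
    "m1 \<in> Poly_Mapping.keys (Lsym Es i k)" "m2 \<in> Poly_Mapping.keys (Lsym Es j k)"
  shows "m1 + m2 + Dmon {k+1..j} \<in> Poly_Mapping.keys (Lsym Es i j)"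
proof -
  have s1: "sgok 1 (Lsym Es i k * Lsym Es j k * (\<Prod>l\<in>{k+1..j}. pvar (DV l)))" for i j k
    using sgok_mult[OF sgok_mult[OF sgok_Lsym sgok_Lsym] sgok_prodD[of "{k+1..j}"]] by simp
  have "m1 + m2 \<in> Poly_Mapping.keys (Lsym Es i k * Lsym Es j k)"
    by (rule sgok_mult_keys[OF sgok_Lsym sgok_Lsym _ _ assms(3,4)]) auto
  then have "m1 + m2 + Dmon {k+1..j} \<in> Poly_Mapping.keys (Lsym Es i k * Lsym Es j k * (\<Prod>l\<in>{k+1..j}. pvar (DV l)))"
    by (intro sgok_mult_keys[OF sgok_mult[OF sgok_Lsym sgok_Lsym] sgok_prodD]) (auto simp: keys_prodD)
  then have "m1 + m2 + Dmon {k+1..j} \<in> Poly_Mapping.keys (\<Sum>k\<in>{1..<j}. Lsym Es i k * Lsym Es j k * (\<Prod>l\<in>{k+1..j}. pvar (DV l)))"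
    by (intro sgok_sum_keys[where s=1, OF s1 _ _ assms(2)]) auto
  then show ?thesis using assms(1) by (simp add: Lsym_nonedge keys_uminus')
qed



locale setup_ctx =
  fixes V :: "'a set" and E :: "'a set set" and \<sigma> :: "'a \<Rightarrow> nat"
  assumes gr: "is_graph V E" and ordg: "is_ordering V \<sigma>"
begin

abbreviation "Es \<equiv> ordered_edges V E \<sigma>"

lemma bij: "bij_betw \<sigma> V {1..card V}" using ordg by (simp add: is_ordering_def)

lemma inv_sigma: "u \<in> V \<Longrightarrow> inv_into V \<sigma> (\<sigma> u) = u"
  using bij by (simp add: bij_betw_def inv_into_f_f)

lemma sigma_range: "u \<in> V \<Longrightarrow> \<sigma> u \<in> {1..card V}"
  using bij by (auto simp: bij_betw_def)

lemma sigma_inj: "u \<in> V \<Longrightarrow> v \<in> V \<Longrightarrow> \<sigma> u = \<sigma> v \<Longrightarrow> u = v"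
  using bij by (auto simp: bij_betw_def inj_on_def)

lemma inv_in: "k \<in> {1..card V} \<Longrightarrow> inv_into V \<sigma> k \<in> V \<and> \<sigma> (inv_into V \<sigma> k) = k"
  using bij by (metis bij_betw_def bij_betw_inv_into_left bij_betw_inv_into f_inv_into_f bij_betw_apply)

lemma Es_iff: "u \<in> V \<Longrightarrow> v \<in> V \<Longrightarrow> (\<sigma> u, \<sigma> v) \<in> Es \<longleftrightarrow> {u, v} \<in> E"
  using sigma_range by (auto simp: ordered_edges_def inv_sigma)

lemma tri_shape: "e \<in> tri V E \<sigma> t \<Longrightarrow> \<exists>x y. e = {x, y} \<and> x \<noteq> y \<and> x \<in> V \<and> y \<in> V"
proof (induction t arbitrary: e)
  case 0 then show ?case using gr by (auto simp: is_graph_def)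
next
  case (Suc t) then show ?case by auto
qed

lemma tri_keys:
  "{u, v} \<in> tri V E \<sigma> t \<Longrightarrow> u \<in> V \<Longrightarrow> v \<in> V \<Longrightarrow> \<sigma> v < \<sigma> u \<Longrightarrow>
     Poly_Mapping.keys (Lsym Es (\<sigma> u) (\<sigma> v)) \<noteq> {}"
proof (induction t arbitrary: u v)
  case 0
  then have "(\<sigma> u, \<sigma> v) \<in> Es" using Es_iff by simp
  then show ?case by (simp add: Lsym_edge pvar_keys)
next
  case (Suc t)
  show ?case
  proof (cases "{u, v} \<in> tri V E \<sigma> t")
    case True then show ?thesis using Suc by blast
  next
    case False
    let ?w = "inv_into V \<sigma> (Suc t)"
    from False Suc.prems(1) obtain u' v' where
      uv: "{u, v} = {u', v'}" and c: "\<sigma> u' > Suc t" "\<sigma> v' > Suc t"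
        "{u', ?w} \<in> tri V E \<sigma> t" "{v', ?w} \<in> tri V E \<sigma> t"
      by auto
    from uv c have cu: "\<sigma> u > Suc t" "{u, ?w} \<in> tri V E \<sigma> t" and
      cv: "\<sigma> v > Suc t" "{v, ?w} \<in> tri V E \<sigma> t"
      by (auto simp: doubleton_eq_iff)
    have "Suc t \<in> {1..card V}" using cu sigma_range[OF Suc.prems(2)] by auto
    then have w: "?w \<in> V" "\<sigma> ?w = Suc t" using inv_in by auto
    have k1: "Poly_Mapping.keys (Lsym Es (\<sigma> u) (Suc t)) \<noteq> {}"
      using Suc.IH[OF cu(2) Suc.prems(2) w(1)] w cu by simp
    have k2: "Poly_Mapping.keys (Lsym Es (\<sigma> v) (Suc t)) \<noteq> {}"
      using Suc.IH[OF cv(2) Suc.prems(3) w(1)] w cv by simp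
    show ?thesis
    proof (cases "(\<sigma> u, \<sigma> v) \<in> Es")
      case True then show ?thesis by (simp add: Lsym_edge pvar_keys)
    next
      case False
      from k1 k2 obtain m1 m2 where "m1 \<in> Poly_Mapping.keys (Lsym Es (\<sigma> u) (Suc t))"
        "m2 \<in> Poly_Mapping.keys (Lsym Es (\<sigma> v) (Suc t))" by blast
      from Lsym_term_keys[OF False _ this] cv(1) show ?thesis by auto
    qed
  qed
qed

lemma triangle_false:
  assumes "x \<in> V" "y \<in> V" "z \<in> V" "\<sigma> z < \<sigma> y" "\<sigma> y < \<sigma> x"
    "{x, y} \<notin> E" "{x, z} \<notin> E" "{y, z} \<notin> E"
    "{x, z} \<in> triangulation V E \<sigma>" "{y, z} \<in> triangulation V E \<sigma>"
    "property_B (card V) Es"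
  shows False
proof -
  let ?a = "\<sigma> x" and ?b = "\<sigma> y" and ?c = "\<sigma> z"
  have nab: "(?a, ?b) \<notin> Es" and nac: "(?a, ?c) \<notin> Es" and nbc: "(?b, ?c) \<notin> Es"
    using assms Es_iff by auto
  obtain m1 where m1: "m1 \<in> Poly_Mapping.keys (Lsym Es ?a ?c)"
    using tri_keys[OF assms(9)[unfolded triangulation_def]] assms by fastforce
  obtain m2 where m2: "m2 \<in> Poly_Mapping.keys (Lsym Es ?b ?c)"
    using tri_keys[OF assms(10)[unfolded triangulation_def]] assms by fastforce
  have c1: "?c \<in> {1..<?b}" using sigma_range[OF assms(3)] assms by auto
  have mk: "m1 + m2 + Dmon {?c+1..?b} \<in> Poly_Mapping.keys (Lsym Es ?a ?b)"
    by (rule Lsym_term_keys[OF nab c1 m1 m2])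
  have "1 \<le> Poly_Mapping.lookup m1 (DV ?c)" by (rule Lsym_nonedge_DV[OF nac m1])
  moreover have "1 \<le> Poly_Mapping.lookup m2 (DV ?c)" by (rule Lsym_nonedge_DV[OF nbc m2])
  ultimately have "2 \<le> Poly_Mapping.lookup (m1 + m2 + Dmon {?c+1..?b}) (DV ?c)"
    by (simp add: lookup_add)
  moreover have "1 \<le> ?b" "?b < ?a" "?a \<le> card V"
    using sigma_range assms by auto
  ultimately show False using assms(11) nab mk unfolding property_B_def
    by (metis numeral_le_one_iff semiring_norm(69) order_trans)
qed

end



theorem theorem4:
  fixes V :: "'a set" and E :: "'a set set" and \<sigma> :: "'a \<Rightarrow> nat"
  assumes "is_graph V E"
    and "is_ordering V \<sigma>"
    and "property_A (card V) (ordered_edges V E \<sigma>)"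
    and "property_B (card V) (ordered_edges V E \<sigma>)"
  shows "GB_graph V E \<and> GB_ordering V E \<sigma>"
proof -
  interpret setup_ctx V E \<sigma> using assms(1,2) by unfold_locales
  let ?T = "triangulation V E \<sigma>"
  have shape: "x \<noteq> y \<and> x \<in> V \<and> y \<in> V" if "{x, y} \<in> ?T" for x y
  proof -
    from tri_shape[OF that[unfolded triangulation_def]]
    obtain a b where "{x, y} = {a, b}" "a \<noteq> b" "a \<in> V" "b \<in> V"
      by (elim exE conjE)
    then show ?thesis by (auto simp: doubleton_eq_iff)
  qed
  have T: "False" if "x \<in> V" "y \<in> V" "z \<in> V" "\<sigma> z < \<sigma> y" "\<sigma> y < \<sigma> x"
    "{x, y} \<notin> E" "{x, z} \<notin> E" "{y, z} \<notin> E" "{x, z} \<in> ?T" "{y, z} \<in> ?T" for x y z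
    using triangle_false[OF that assms(4)] .
  have "GB_ordering V E \<sigma>"
    unfolding GB_ordering_def
  proof (intro conjI notI)
    show "is_ordering V \<sigma>" by (rule assms(2))
    assume "\<exists>u v w. {u, v} \<notin> E \<and> {v, w} \<notin> E \<and> {u, w} \<notin> E \<and>
        {u, v} \<in> ?T \<and> {v, w} \<in> ?T \<and> {u, w} \<in> ?T"
    then obtain u v w where h: "{u, v} \<notin> E" "{v, w} \<notin> E" "{u, w} \<notin> E"
        "{u, v} \<in> ?T" "{v, w} \<in> ?T" "{u, w} \<in> ?T" by blast
    have V: "u \<in> V" "v \<in> V" "w \<in> V" and d: "u \<noteq> v" "v \<noteq> w" "u \<noteq> w"
      using shape[OF h(4)] shape[OF h(5)] shape[OF h(6)] by auto
    have s: "\<sigma> u \<noteq> \<sigma> v" "\<sigma> v \<noteq> \<sigma> w" "\<sigma> u \<noteq> \<sigma> w"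
      using sigma_inj[OF V(1) V(2)] sigma_inj[OF V(2) V(3)] sigma_inj[OF V(1) V(3)] d by auto
    have c: "{v, u} \<notin> E" "{w, v} \<notin> E" "{w, u} \<notin> E"
        "{v, u} \<in> ?T" "{w, v} \<in> ?T" "{w, u} \<in> ?T" using h by (simp_all add: insert_commute)
    show False
    proof (cases "\<sigma> u < \<sigma> v")
      case True
      show False
      proof (cases "\<sigma> v < \<sigma> w")
        case True
        then show False using \<open>\<sigma> u < \<sigma> v\<close> by (intro T[of w v u]) (simp_all add: V h c)
      next
        case False
        then have "\<sigma> w < \<sigma> v" using s by simp
        show False
        proof (cases "\<sigma> u < \<sigma> w")
          case True
          then show False using \<open>\<sigma> w < \<sigma> v\<close> by (intro T[of v w u]) (simp_all add: V h c)
        next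
          case False
          then have "\<sigma> w < \<sigma> u" using s by simp
          then show False using \<open>\<sigma> u < \<sigma> v\<close> by (intro T[of v u w]) (simp_all add: V h c)
        qed
      qed
    next
      case False
      then have uv: "\<sigma> v < \<sigma> u" using s by simp
      show False
      proof (cases "\<sigma> u < \<sigma> w")
        case True
        then show False using uv by (intro T[of w u v]) (simp_all add: V h c)
      next
        case False
        then have "\<sigma> w < \<sigma> u" using s by simp
        show False
        proof (cases "\<sigma> v < \<sigma> w")
          case True
          then show False using \<open>\<sigma> w < \<sigma> u\<close> by (intro T[of u w v]) (simp_all add: V h c)
        next
          case False
          then have "\<sigma> w < \<sigma> v" using s by simp
          then show False using uv by (intro T[of u v w]) (simp_all add: V h c)
        qed
      qed
    qed
  qed
  then show ?thesis unfolding GB_graph_def by blast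
qed

end
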